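(* Let $n\ge 2$ be even. Then there exists no matching mechanism that is resolute and symmetric (i.e. $G^*$-symmetric).
   Context: Fix $n\ge 2$, $W=\{1,\dots,n\}$ (women), $M=\{n+1,\dots,2n\}$ (men), $I=W\cup M$. Permutations compose right-to-left. A preference profile is a function $p$ on $I$ assigning to each $x\in W$ a linear order $p(x)$ on $M$ and to each $y\in M$ a linear order $p(y)$ on $W$; $\mathcal{P}$ is the set of preference profiles. A matching is a permutation $\mu$ of $I$ with $\mu(W)=M$, $\mu(M)=W$ and $\mu(\mu(z))=z$ for all $z\in I$; $\mathcal{M}$ is the set of matchings. Let $G^*=\{\varphi\in\mathrm{Sym}(I):\{\varphi(W),\varphi(M)\}=\{W,M\}\}$. For a linear order $R$ on $X\subseteq I$ and $\varphi\in\mathrm{Sym}(I)$, $\varphi R$ is the relation on $\varphi(X)$ with $(a,b)\in\varphi R$ iff $(\varphi^{-1}(a),\varphi^{-1}(b))\in R$. For $p\in\mathcal{P}$ and $\varphi\in G^*$, $p^\varphi\in\mathcal{P}$ is defined by $p^\varphi(z)=\varphi\,p(\varphi^{-1}(z))$. For a permutation $\mu$, $\mu^\varphi=\varphi\mu\varphi^{-1}$, and for a set $S$ of permutations $S^\varphi=\{\mu^\varphi:\mu\in S\}$. A matching mechanism is a correspondence $F$ from $\mathcal{P}$ to $\mathcal{M}$ (a map assigning to each $p$ a subset $F(p)\subseteq\mathcal{M}$). $F$ is resolute if $|F(p)|=1$ for all $p$. For $U\subseteq G^*$, $F$ is $U$-symmetric if $F(p^\varphi)=F(p)^\varphi$ for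 all $p\in\mathcal{P}$, $\varphi\in U$; symmetric means $G^*$-symmetric. *)

theory Defs
  imports "HOL-Combinatorics.Permutations"
begin

text \<open>A preference profile assigns to every agent a relation (set of pairs); values outside I
  are fixed to the empty relation so that profiles are exactly functions on I.\<close>

definition women :: "nat \<Rightarrow> nat set" where "women n = {1..n}"
definition men :: "nat \<Rightarrow> nat set" where "men n = {n+1..2*n}"
definition agents :: "nat \<Rightarrow> nat set" where "agents n = women n \<union> men n"

type_synonym profile = "nat \<Rightarrow> (nat \<times> nat) set"

definition profiles :: "nat \<Rightarrow> profile set" where
  "profiles n = {p. (\<forall>x\<in>women n. linear_order_on (men n) (p x))
                  \<and> (\<forall>y\<in>men n. linear_order_on (women n) (p y))
                  \<and> (\<forall>z. z \<notin> agents n \<longrightarrow> p z = {})}"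

definition matchings :: "nat \<Rightarrow> (nat \<Rightarrow> nat) set" where
  "matchings n = {\<mu>. \<mu> permutes agents n \<and> \<mu> ` women n = men n \<and> \<mu> ` men n = women n
                   \<and> (\<forall>z\<in>agents n. \<mu> (\<mu> z) = z)}"

definition Gstar :: "nat \<Rightarrow> (nat \<Rightarrow> nat) set" where
  "Gstar n = {\<phi>. \<phi> permutes agents n \<and> {\<phi> ` women n, \<phi> ` men n} = {women n, men n}}"

definition rel_act :: "(nat \<Rightarrow> nat) \<Rightarrow> (nat \<times> nat) set \<Rightarrow> (nat \<times> nat) set" where
  "rel_act \<phi> R = {(a, b). (inv \<phi> a, inv \<phi> b) \<in> R}"

definition profile_act :: "profile \<Rightarrow> (nat \<Rightarrow> nat) \<Rightarrow> profile" where
  "profile_act p \<phi> = (\<lambda>z. rel_act \<phi> (p (inv \<phi> z)))"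

definition perm_conj :: "(nat \<Rightarrow> nat) \<Rightarrow> (nat \<Rightarrow> nat) \<Rightarrow> (nat \<Rightarrow> nat)" where
  "perm_conj \<mu> \<phi> = \<phi> \<circ> \<mu> \<circ> inv \<phi>"

definition mechanism :: "nat \<Rightarrow> (profile \<Rightarrow> (nat \<Rightarrow> nat) set) \<Rightarrow> bool" where
  "mechanism n F \<longleftrightarrow> (\<forall>p\<in>profiles n. F p \<subseteq> matchings n)"

definition resolute :: "nat \<Rightarrow> (profile \<Rightarrow> (nat \<Rightarrow> nat) set) \<Rightarrow> bool" where
  "resolute n F \<longleftrightarrow> (\<forall>p\<in>profiles n. card (F p) = 1)"

definition U_symmetric :: "nat \<Rightarrow> (nat \<Rightarrow> nat) set \<Rightarrow> (profile \<Rightarrow> (nat \<Rightarrow> nat) set) \<Rightarrow> bool" where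
  "U_symmetric n U F \<longleftrightarrow>
     (\<forall>p\<in>profiles n. \<forall>\<phi>\<in>U. F (profile_act p \<phi>) = (\<lambda>\<mu>. perm_conj \<mu> \<phi>) ` F p)"

definition symmetric :: "nat \<Rightarrow> (profile \<Rightarrow> (nat \<Rightarrow> nat) set) \<Rightarrow> bool" where
  "symmetric n F \<longleftrightarrow> U_symmetric n (Gstar n) F"

end

theory Submission
  imports Defs
begin

definition ph :: "nat \<Rightarrow> nat \<Rightarrow> nat" where
  "ph n x = (if 1 \<le> x \<and> x \<le> n then n + x else if n < x \<and> x < 2*n then x - n + 1
             else if x = 2*n \<and> 0 < n then 1 else x)"

definition bp :: "nat \<Rightarrow> nat \<Rightarrow> nat" where
  "bp n x = (if x \<le> n then 2*(x-1) else 2*(x-n)-1)"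

definition dd :: "nat \<Rightarrow> nat \<Rightarrow> nat \<Rightarrow> nat" where
  "dd n z x = (if bp n z \<le> bp n x then bp n x - bp n z else bp n x + 2*n - bp n z)"

definition pr :: "nat \<Rightarrow> profile" where
  "pr n z = (if z \<in> agents n then {(x,y). x \<in> agents n \<and> y \<in> agents n \<and> odd (bp n x + bp n z)
       \<and> odd (bp n y + bp n z) \<and> dd n z x \<le> dd n z y} else {})"

lemma agents_iff: "x \<in> agents n \<longleftrightarrow> 1 \<le> x \<and> x \<le> 2*n"
  by (auto simp: agents_def women_def men_def)

lemma bp_lt: "x \<in> agents n \<Longrightarrow> bp n x < 2*n"
  by (auto simp: agents_iff bp_def)

lemma bp_inj: "x \<in> agents n \<Longrightarrow> y \<in> agents n \<Longrightarrow> bp n x = bp n y \<Longrightarrow> x = y"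
  by (auto simp: agents_iff bp_def split: if_splits) presburger+

lemma bp_women: "x \<in> women n \<Longrightarrow> even (bp n x)"
  by (auto simp: women_def bp_def)

lemma bp_men: "x \<in> men n \<Longrightarrow> odd (bp n x)"
  by (auto simp: men_def bp_def)

lemma ph_agents: "0 < n \<Longrightarrow> ph n x \<in> agents n \<longleftrightarrow> x \<in> agents n"
  by (auto simp: agents_iff ph_def)

lemma ph_out: "x \<notin> agents n \<Longrightarrow> ph n x = x"
  by (auto simp: agents_iff ph_def)

lemma bp_ph: "0 < n \<Longrightarrow> x \<in> agents n \<Longrightarrow> bp n (ph n x) = (if bp n x + 1 = 2*n then 0 else bp n x + 1)"
  by (auto simp: agents_iff ph_def bp_def)

lemma bp_ph_mod: "0 < n \<Longrightarrow> x \<in> agents n \<Longrightarrow> bp n (ph n x) = (bp n x + 1) mod (2*n)"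
  using bp_ph[of n x] bp_lt[of x n] by auto

lemma ph_inj: "0 < n \<Longrightarrow> inj (ph n)"
proof (rule injI)
  fix x y assume n: "0 < n" and e: "ph n x = ph n y"
  show "x = y"
  proof (cases "x \<in> agents n")
    case True
    then have y: "y \<in> agents n" using e ph_agents[OF n] by metis
    have "bp n (ph n x) = bp n (ph n y)" using e by simp
    then have "bp n x = bp n y" using bp_ph[OF n True] bp_ph[OF n y] bp_lt[OF True] bp_lt[OF y]
      by (auto split: if_splits)
    then show ?thesis using bp_inj True y by blast
  next
    case False
    then have y: "y \<notin> agents n" using e ph_agents[OF n] by metis
    then show ?thesis using e False ph_out by metis
  qed
qed

lemma ph_women: "0 < n \<Longrightarrow> ph n ` women n = men n"
proof
  assume n: "0 < n"
  show "ph n ` women n \<subseteq> men n" by (auto simp: women_def men_def ph_def)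
  show "men n \<subseteq> ph n ` women n"
  proof
    fix m assume "m \<in> men n"
    then have "m = ph n (m - n)" "m - n \<in> women n" by (auto simp: women_def men_def ph_def)
    then show "m \<in> ph n ` women n" by blast
  qed
qed

lemma ph_men: "0 < n \<Longrightarrow> ph n ` men n = women n"
proof
  assume n: "0 < n"
  show "ph n ` men n \<subseteq> women n" by (auto simp: women_def men_def ph_def)
  show "women n \<subseteq> ph n ` men n"
  proof
    fix w assume w: "w \<in> women n"
    show "w \<in> ph n ` men n"
    proof (cases "w = 1")
      case True
      then have "w = ph n (2*n)" "2*n \<in> men n" using n by (auto simp: women_def men_def ph_def)
      then show ?thesis by blast
    next
      case False
      then have "w = ph n (w - 1 + n)" "w - 1 + n \<in> men n" using w by (auto simp: women_def men_def ph_def)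
      then show ?thesis by blast
    qed
  qed
qed

lemma ph_perm: assumes n: "0 < n" shows "ph n permutes agents n"
proof (rule bij_imp_permutes)
  show "bij_betw (ph n) (agents n) (agents n)"
    unfolding bij_betw_def using ph_inj[OF n] ph_women[OF n] ph_men[OF n]
    by (auto simp: agents_def inj_on_def inj_def image_Un)
  show "ph n x = x" if "x \<notin> agents n" for x using ph_out that by blast
qed

lemma ph_Gstar: "0 < n \<Longrightarrow> ph n \<in> Gstar n"
  using ph_perm ph_women ph_men by (auto simp: Gstar_def)


lemma lin_inj: "inj_on (f::nat \<Rightarrow> nat) A \<Longrightarrow> linear_order_on A {(x,y). x\<in>A \<and> y\<in>A \<and> f x \<le> f y}"
  unfolding linear_order_on_def partial_order_on_def preorder_on_def refl_on_def trans_def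
    antisym_def total_on_def inj_on_def
  by auto

lemma dd_inj: "z \<in> agents n \<Longrightarrow> inj_on (dd n z) (agents n)"
  unfolding inj_on_def
proof (intro ballI impI)
  fix x y assume z: "z \<in> agents n" and x: "x \<in> agents n" and y: "y \<in> agents n"
    and e: "dd n z x = dd n z y"
  have "bp n x = bp n y" using e bp_lt[OF x] bp_lt[OF y] bp_lt[OF z]
    by (auto simp: dd_def split: if_splits)
  then show "x = y" using bp_inj x y by blast
qed

lemma opp_women: "z \<in> women n \<Longrightarrow> {x. x \<in> agents n \<and> odd (bp n x + bp n z)} = men n"
  using bp_women bp_men by (auto simp: agents_def)

lemma opp_men: "z \<in> men n \<Longrightarrow> {x. x \<in> agents n \<and> odd (bp n x + bp n z)} = women n"
  using bp_women bp_men by (auto simp: agents_def)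

lemma pr_women: "z \<in> women n \<Longrightarrow> pr n z = {(x,y). x\<in>men n \<and> y\<in>men n \<and> dd n z x \<le> dd n z y}"
proof -
  assume z: "z \<in> women n"
  then have za: "z \<in> agents n" by (simp add: agents_def)
  have eq: "\<And>x. (x \<in> agents n \<and> odd (bp n x + bp n z)) = (x \<in> men n)" using opp_women[OF z] by blast
  show ?thesis unfolding pr_def if_P[OF za] using eq by blast
qed

lemma pr_men: "z \<in> men n \<Longrightarrow> pr n z = {(x,y). x\<in>women n \<and> y\<in>women n \<and> dd n z x \<le> dd n z y}"
proof -
  assume z: "z \<in> men n"
  then have za: "z \<in> agents n" by (simp add: agents_def)
  have eq: "\<And>x. (x \<in> agents n \<and> odd (bp n x + bp n z)) = (x \<in> women n)" using opp_men[OF z] by blast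
  show ?thesis unfolding pr_def if_P[OF za] using eq by blast
qed

lemma pr_profiles: "pr n \<in> profiles n"
  unfolding profiles_def
proof (intro CollectI conjI ballI allI impI)
  fix x assume x: "x \<in> women n"
  then have "x \<in> agents n" by (auto simp: agents_def)
  then have "inj_on (dd n x) (men n)" using dd_inj by (metis agents_def inj_on_Un)
  then show "linear_order_on (men n) (pr n x)" using pr_women[OF x] lin_inj by simp
next
  fix x assume x: "x \<in> men n"
  then have "x \<in> agents n" by (auto simp: agents_def)
  then have "inj_on (dd n x) (women n)" using dd_inj by (metis agents_def inj_on_Un)
  then show "linear_order_on (women n) (pr n x)" using pr_men[OF x] lin_inj by simp
next
  fix z assume "z \<notin> agents n" then show "pr n z = {}" by (simp add: pr_def)
qed

lemma dd_ph: "0 < n \<Longrightarrow> z \<in> agents n \<Longrightarrow> x \<in> agents n \<Longrightarrow> dd n (ph n z) (ph n x) = dd n z x"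
  using bp_ph[of n z] bp_ph[of n x] bp_lt[of z n] bp_lt[of x n]
  by (auto simp: dd_def)

lemma par_ph: "0 < n \<Longrightarrow> z \<in> agents n \<Longrightarrow> x \<in> agents n \<Longrightarrow>
   odd (bp n (ph n x) + bp n (ph n z)) = odd (bp n x + bp n z)"
proof -
  assume n: "0 < n" and z: "z \<in> agents n" and x: "x \<in> agents n"
  define a where "a = bp n z"
  define c where "c = bp n x"
  have hz: "bp n (ph n z) = (if a + 1 = 2*n then 0 else a + 1)" using bp_ph[OF n z] a_def by simp
  have hx: "bp n (ph n x) = (if c + 1 = 2*n then 0 else c + 1)" using bp_ph[OF n x] c_def by simp
  have "odd ((if c + 1 = 2*n then 0 else c + 1) + (if a + 1 = 2*n then 0 else a + 1)) = odd (c + a)"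
    by (cases "c + 1 = 2*n"; cases "a + 1 = 2*n"; simp; presburger)
  then show ?thesis using hz hx a_def c_def by simp
qed

lemma pr_ph: assumes n: "0 < n"
  shows "(ph n u, ph n v) \<in> pr n (ph n y) \<longleftrightarrow> (u, v) \<in> pr n y"
proof (cases "y \<in> agents n")
  case True
  have py: "ph n y \<in> agents n" using True ph_agents[OF n] by blast
  show ?thesis
  proof (cases "u \<in> agents n \<and> v \<in> agents n")
    case uv: True
    have "(ph n u, ph n v) \<in> pr n (ph n y) \<longleftrightarrow>
      odd (bp n (ph n u) + bp n (ph n y)) \<and> odd (bp n (ph n v) + bp n (ph n y))
      \<and> dd n (ph n y) (ph n u) \<le> dd n (ph n y) (ph n v)"
      using py uv ph_agents[OF n] unfolding pr_def by simp
    also have "\<dots> \<longleftrightarrow> odd (bp n u + bp n y) \<and> odd (bp n v + bp n y) \<and> dd n y u \<le> dd n y v"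
      using uv dd_ph[OF n True] par_ph[OF n True] by simp
    also have "\<dots> \<longleftrightarrow> (u, v) \<in> pr n y" using True uv unfolding pr_def by simp
    finally show ?thesis .
  next
    case False
    then have "\<not> (ph n u \<in> agents n \<and> ph n v \<in> agents n)" using ph_agents[OF n] by blast
    then show ?thesis using False unfolding pr_def by auto
  qed
next
  case False
  then show ?thesis using ph_out[OF False] by (simp add: pr_def)
qed

lemma pr_fixed: assumes n: "0 < n" shows "profile_act (pr n) (ph n) = pr n"
proof
  fix z
  have bij: "bij (ph n)" using ph_perm[OF n] permutes_bij by blast
  obtain y where y: "z = ph n y" using bij by (metis bij_pointE)
  have fi: "\<And>a. ph n (inv (ph n) a) = a" using bij by (simp add: bij_is_surj surj_f_inv_f)
  have iy: "inv (ph n) z = y" using y bij by (simp add: bij_is_inj)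
  have "rel_act (ph n) (pr n y) = pr n (ph n y)"
  proof (safe)
    fix a c assume "(a, c) \<in> rel_act (ph n) (pr n y)"
    then have "(inv (ph n) a, inv (ph n) c) \<in> pr n y" by (simp add: rel_act_def)
    then have "(ph n (inv (ph n) a), ph n (inv (ph n) c)) \<in> pr n (ph n y)" using pr_ph[OF n] by blast
    then show "(a, c) \<in> pr n (ph n y)" using fi by simp
  next
    fix a c assume "(a, c) \<in> pr n (ph n y)"
    then have "(ph n (inv (ph n) a), ph n (inv (ph n) c)) \<in> pr n (ph n y)" using fi by simp
    then have "(inv (ph n) a, inv (ph n) c) \<in> pr n y" using pr_ph[OF n] by blast
    then show "(a, c) \<in> rel_act (ph n) (pr n y)" by (simp add: rel_act_def)
  qed
  then show "profile_act (pr n) (ph n) z = pr n z" using y iy by (simp add: profile_act_def)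
qed

lemma arith_fact: assumes "odd (j::nat)" "j < 2*n" "even n" "(j + j) mod (2*n) = 0" shows False
proof -
  have "2*n dvd 2*j" using assms(4) by (simp add: mult_2 dvd_eq_mod_eq_0)
  then have "n dvd j" by simp
  then obtain c where c: "j = n*c" by blast
  have "c < 2" using assms(2) c by (metis mult.commute mult_less_cancel1 )
  then have "c = 0 \<or> c = 1" by auto
  then show False using c assms(1,3) by auto
qed

lemma no_comm: assumes n: "n \<ge> 2" and ev: "even n" and mu: "\<mu> \<in> matchings n"
  and comm: "\<And>x. \<mu> (ph n x) = ph n (\<mu> x)"
  shows False
proof -
  have n0: "0 < n" using n by simp
  have perm: "\<mu> permutes agents n" using mu unfolding matchings_def by blast
  have mw: "\<mu> ` women n = men n" using mu unfolding matchings_def by blast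
  have inv: "\<And>z. z \<in> agents n \<Longrightarrow> \<mu> (\<mu> z) = z" using mu unfolding matchings_def by blast
  have muA: "\<And>z. z \<in> agents n \<Longrightarrow> \<mu> z \<in> agents n" using perm by (simp add: permutes_in_image)
  have w1: "1 \<in> women n" using n by (simp add: women_def)
  have a1: "1 \<in> agents n" using w1 by (simp add: agents_def)
  have b1: "bp n 1 = 0" using n0 by (simp add: bp_def)
  define j where "j = bp n (\<mu> 1)"
  have m1: "\<mu> 1 \<in> men n" using mw w1 by blast
  then have jo: "odd j" unfolding j_def by (rule bp_men)
  have ma1: "\<mu> 1 \<in> agents n" using m1 by (simp add: agents_def)
  have jl: "j < 2*n" unfolding j_def using bp_lt[OF ma1] .
  have A: "k < 2*n \<Longrightarrow> bp n ((ph n ^^ k) 1) = k \<and> (ph n ^^ k) 1 \<in> agents n" for k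
  proof (induction k)
    case 0 then show ?case using a1 b1 by simp
  next
    case (Suc k)
    then have h1: "bp n ((ph n ^^ k) 1) = k" and h2: "(ph n ^^ k) 1 \<in> agents n" by auto
    have e: "(ph n ^^ Suc k) 1 = ph n ((ph n ^^ k) 1)" by simp
    have "bp n (ph n ((ph n ^^ k) 1)) = (if k + 1 = 2*n then 0 else k + 1)"
      using bp_ph[OF n0 h2] h1 by simp
    also have "\<dots> = Suc k" using Suc.prems by simp
    finally have "bp n ((ph n ^^ Suc k) 1) = Suc k" using e by simp
    moreover have "(ph n ^^ Suc k) 1 \<in> agents n" using e h2 ph_agents[OF n0] by simp
    ultimately show ?case by blast
  qed
  have B: "bp n (\<mu> ((ph n ^^ k) 1)) = (k + j) mod (2*n) \<and> \<mu> ((ph n ^^ k) 1) \<in> agents n" for k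
  proof (induction k)
    case 0 then show ?case using ma1 jl by (simp add: j_def)
  next
    case (Suc k)
    then have h1: "bp n (\<mu> ((ph n ^^ k) 1)) = (k + j) mod (2*n)" and h2: "\<mu> ((ph n ^^ k) 1) \<in> agents n"
      by auto
    have e: "\<mu> ((ph n ^^ Suc k) 1) = ph n (\<mu> ((ph n ^^ k) 1))" using comm by simp
    have "bp n (ph n (\<mu> ((ph n ^^ k) 1))) = ((k + j) mod (2*n) + 1) mod (2*n)"
      using bp_ph_mod[OF n0 h2] h1 by simp
    also have "\<dots> = (Suc k + j) mod (2*n)" by (simp add: mod_Suc_eq)
    finally have "bp n (\<mu> ((ph n ^^ Suc k) 1)) = (Suc k + j) mod (2*n)" using e by simp
    moreover have "\<mu> ((ph n ^^ Suc k) 1) \<in> agents n" using e h2 ph_agents[OF n0] by simp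
    ultimately show ?case by blast
  qed
  have Aj: "bp n ((ph n ^^ j) 1) = j" "(ph n ^^ j) 1 \<in> agents n" using A[OF jl] by auto
  have "(ph n ^^ j) 1 = \<mu> 1" using bp_inj[OF Aj(2) ma1] Aj(1) unfolding j_def by simp
  then have "\<mu> ((ph n ^^ j) 1) = 1" using inv[OF a1] by simp
  then have "(j + j) mod (2*n) = 0" using B[of j] b1 by simp
  then show False by (rule arith_fact[OF jo jl ev])
qed

theorem theorem2:
  fixes n :: nat
  assumes "n \<ge> 2" and "even n"
  shows "\<not> (\<exists>F. mechanism n F \<and> resolute n F \<and> symmetric n F)"
proof
  assume "\<exists>F. mechanism n F \<and> resolute n F \<and> symmetric n F"
  then obtain F where me: "mechanism n F" and re: "resolute n F" and sy: "symmetric n F" by blast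
  have n0: "0 < n" using assms by simp
  have p: "pr n \<in> profiles n" by (rule pr_profiles)
  have "card (F (pr n)) = 1" using re p by (simp add: resolute_def)
  then obtain \<mu> where Fp: "F (pr n) = {\<mu>}" by (rule card_1_singletonE)
  have mu: "\<mu> \<in> matchings n" using me p Fp by (auto simp: mechanism_def)
  have "F (profile_act (pr n) (ph n)) = (\<lambda>\<mu>. perm_conj \<mu> (ph n)) ` F (pr n)"
    using sy p ph_Gstar[OF n0] unfolding symmetric_def U_symmetric_def by blast
  then have "{\<mu>} = {perm_conj \<mu> (ph n)}" using Fp pr_fixed[OF n0] by simp
  then have e: "\<mu> = ph n \<circ> \<mu> \<circ> inv (ph n)" by (simp add: perm_conj_def)
  have inj: "inj (ph n)" using ph_inj[OF n0] .
  have "\<mu> (ph n x) = ph n (\<mu> x)" for x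
  proof -
    have "\<mu> (ph n x) = (ph n \<circ> \<mu> \<circ> inv (ph n)) (ph n x)" using e by simp
    also have "\<dots> = ph n (\<mu> x)" using inj by simp
    finally show ?thesis .
  qed
  then show False using no_comm[OF assms mu] by blast
qed

end
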